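(* Let $G$ be a group and for $g\in G$ let $\mathcal{C}(G)_g=\mathcal{C}(G)\setminus\{\{g\}\}$ (the coset poset with the singleton coset $\{g\}$ removed). If for some $g\in G$ and some $n\geq 0$ we have $\tilde{H}_n(|\mathcal{C}(G)_g|;\mathbb{Z})=0$, then there is a surjection $\tilde{H}_{n+1}(|\mathcal{C}(G)|;\mathbb{Z})\twoheadrightarrow \tilde{H}_n(|L(G)|;\mathbb{Z})$.
   Context: For a group $G$, the coset poset $\mathcal{C}(G)$ is the set of left cosets of all proper subgroups of $G$ (including the trivial subgroup), ordered by inclusion; $L(G)$ is the poset of proper nontrivial subgroups of $G$ ordered by inclusion; $|P|$ denotes the geometric realization of the order complex (chains) of $P$; $\tilde H_*$ is reduced homology. *)

theory Defs
  imports "HOL-Homology.Homology" "HOL-Algebra.Algebra"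
begin

text \<open>The order complex has as simplices the finite nonempty chains of P.
  Points of the geometric realization are finitely supported functions
  x :: 'v \<Rightarrow> real, nonnegative, summing to 1, whose support is a chain of P.
  The topology is the weak (coherent) topology: U is open iff its trace on
  every closed simplex is open in the Euclidean topology of that simplex
  (which is the subspace topology inherited from the product topology).\<close>

definition is_chain :: "('v \<Rightarrow> 'v \<Rightarrow> bool) \<Rightarrow> 'v set \<Rightarrow> bool" where
  "is_chain ord S \<longleftrightarrow> (\<forall>x\<in>S. \<forall>y\<in>S. ord x y \<or> ord y x)"

definition realization_carrier :: "'v set \<Rightarrow> ('v \<Rightarrow> 'v \<Rightarrow> bool) \<Rightarrow> ('v \<Rightarrow> real) set" where
  "realization_carrier P ord =
     {x. (\<forall>v. 0 \<le> x v) \<and> finite {v. x v \<noteq> 0} \<and> {v. x v \<noteq> 0} \<subseteq> P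
         \<and> is_chain ord {v. x v \<noteq> 0} \<and> sum x {v. x v \<noteq> 0} = 1}"

definition closed_simplex :: "'v set \<Rightarrow> ('v \<Rightarrow> 'v \<Rightarrow> bool) \<Rightarrow> 'v set \<Rightarrow> ('v \<Rightarrow> real) set" where
  "closed_simplex P ord \<sigma> = {x \<in> realization_carrier P ord. {v. x v \<noteq> 0} \<subseteq> \<sigma>}"

definition realization :: "'v set \<Rightarrow> ('v \<Rightarrow> 'v \<Rightarrow> bool) \<Rightarrow> ('v \<Rightarrow> real) topology" where
  "realization P ord = topology (\<lambda>U. U \<subseteq> realization_carrier P ord \<and>
     (\<forall>\<sigma>. finite \<sigma> \<and> \<sigma> \<subseteq> P \<and> is_chain ord \<sigma> \<longrightarrow>
        openin (subtopology (powertop_real UNIV) (closed_simplex P ord \<sigma>))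
               (U \<inter> closed_simplex P ord \<sigma>)))"

lemma istopology_realization:
  "istopology (\<lambda>U. U \<subseteq> realization_carrier P ord \<and>
     (\<forall>\<sigma>. finite \<sigma> \<and> \<sigma> \<subseteq> P \<and> is_chain ord \<sigma> \<longrightarrow>
        openin (subtopology (powertop_real UNIV) (closed_simplex P ord \<sigma>))
               (U \<inter> closed_simplex P ord \<sigma>)))"
  unfolding istopology_def
proof (rule conjI; intro allI impI)
  fix S T assume S: "S \<subseteq> realization_carrier P ord \<and> (\<forall>\<sigma>. finite \<sigma> \<and> \<sigma> \<subseteq> P \<and> is_chain ord \<sigma> \<longrightarrow>
        openin (subtopology (powertop_real UNIV) (closed_simplex P ord \<sigma>)) (S \<inter> closed_simplex P ord \<sigma>))"
    and T: "T \<subseteq> realization_carrier P ord \<and> (\<forall>\<sigma>. finite \<sigma> \<and> \<sigma> \<subseteq> P \<and> is_chain ord \<sigma> \<longrightarrow>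
        openin (subtopology (powertop_real UNIV) (closed_simplex P ord \<sigma>)) (T \<inter> closed_simplex P ord \<sigma>))"
  show "S \<inter> T \<subseteq> realization_carrier P ord \<and> (\<forall>\<sigma>. finite \<sigma> \<and> \<sigma> \<subseteq> P \<and> is_chain ord \<sigma> \<longrightarrow>
        openin (subtopology (powertop_real UNIV) (closed_simplex P ord \<sigma>)) (S \<inter> T \<inter> closed_simplex P ord \<sigma>))"
  proof (intro conjI allI impI)
    show "S \<inter> T \<subseteq> realization_carrier P ord" using S by blast
  next
    fix \<sigma> assume h: "finite \<sigma> \<and> \<sigma> \<subseteq> P \<and> is_chain ord \<sigma>"
    have "S \<inter> T \<inter> closed_simplex P ord \<sigma> = (S \<inter> closed_simplex P ord \<sigma>) \<inter> (T \<inter> closed_simplex P ord \<sigma>)" by blast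
    then show "openin (subtopology (powertop_real UNIV) (closed_simplex P ord \<sigma>)) (S \<inter> T \<inter> closed_simplex P ord \<sigma>)"
      using S T h by (simp add: openin_Int)
  qed
next
  fix K assume K: "\<forall>S\<in>K. S \<subseteq> realization_carrier P ord \<and> (\<forall>\<sigma>. finite \<sigma> \<and> \<sigma> \<subseteq> P \<and> is_chain ord \<sigma> \<longrightarrow>
        openin (subtopology (powertop_real UNIV) (closed_simplex P ord \<sigma>)) (S \<inter> closed_simplex P ord \<sigma>))"
  show "\<Union>K \<subseteq> realization_carrier P ord \<and> (\<forall>\<sigma>. finite \<sigma> \<and> \<sigma> \<subseteq> P \<and> is_chain ord \<sigma> \<longrightarrow>
        openin (subtopology (powertop_real UNIV) (closed_simplex P ord \<sigma>)) (\<Union>K \<inter> closed_simplex P ord \<sigma>))"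
  proof (intro conjI allI impI)
    show "\<Union>K \<subseteq> realization_carrier P ord" using K by blast
  next
    fix \<sigma> assume h: "finite \<sigma> \<and> \<sigma> \<subseteq> P \<and> is_chain ord \<sigma>"
    have eqU: "\<Union>K \<inter> closed_simplex P ord \<sigma> = \<Union>((\<lambda>S. S \<inter> closed_simplex P ord \<sigma>) ` K)" by blast
    show "openin (subtopology (powertop_real UNIV) (closed_simplex P ord \<sigma>)) (\<Union>K \<inter> closed_simplex P ord \<sigma>)"
    proof -
      have "openin (subtopology (powertop_real UNIV) (closed_simplex P ord \<sigma>)) (\<Union>((\<lambda>S. S \<inter> closed_simplex P ord \<sigma>) ` K))"
        using K h by (intro openin_Union) blast
      then show ?thesis by (simp only: eqU)
    qed
  qed
qed

lemma topspace_realization: "topspace (realization P ord) = realization_carrier P ord"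
proof -
  have "openin (realization P ord) (realization_carrier P ord)"
  proof -
    have o: "\<And>S. openin (subtopology (powertop_real UNIV) S) S"
      by (simp add: openin_subtopology_refl)
    have i: "\<And>\<sigma>. realization_carrier P ord \<inter> closed_simplex P ord \<sigma> = closed_simplex P ord \<sigma>"
      by (auto simp: closed_simplex_def)
    show ?thesis
      unfolding realization_def topology_inverse'[OF istopology_realization]
      by (intro conjI subset_refl allI impI) (simp only: i o)
  qed
  moreover have "\<And>U. openin (realization P ord) U \<Longrightarrow> U \<subseteq> realization_carrier P ord"
    unfolding realization_def topology_inverse'[OF istopology_realization] by blast
  ultimately show ?thesis by (auto simp: topspace_def)
qed

definition coset_poset :: "('a, 'b) monoid_scheme \<Rightarrow> 'a set set" where
  "coset_poset G = {g <#\<^bsub>G\<^esub> H | g H. g \<in> carrier G \<and> subgroup H G \<and> H \<noteq> carrier G}"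

definition subgroup_poset :: "('a, 'b) monoid_scheme \<Rightarrow> 'a set set" where
  "subgroup_poset G = {H. subgroup H G \<and> H \<noteq> carrier G \<and> H \<noteq> {\<one>\<^bsub>G\<^esub>}}"

end

theory Submission
  imports Defs "HOL-Analysis.Analysis"
begin
definition coh :: "'x topology \<Rightarrow> 'x topology \<Rightarrow> 'x set set \<Rightarrow> bool" where
  "coh Z T F \<longleftrightarrow> topspace Z = \<Union>F \<and> (\<forall>K\<in>F. K \<subseteq> topspace T) \<and>
     (\<forall>Ov. Ov \<subseteq> topspace Z \<and> (\<forall>K\<in>F. openin (subtopology T K) (Ov \<inter> K)) \<longrightarrow> openin Z Ov)"

lemma coh_openI:
  assumes "coh Z T F" "Ov \<subseteq> topspace Z" "\<And>K. K \<in> F \<Longrightarrow> openin (subtopology T K) (Ov \<inter> K)"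
  shows "openin Z Ov"
  using assms unfolding coh_def by (meson ballI)

lemma coh_top: "coh Z T F \<Longrightarrow> topspace Z = \<Union>F"
  unfolding coh_def by simp

lemma coh_subT: "coh Z T F \<Longrightarrow> K \<in> F \<Longrightarrow> K \<subseteq> topspace T"
  unfolding coh_def by simp

lemma coh_subZ: "coh Z T F \<Longrightarrow> K \<in> F \<Longrightarrow> K \<subseteq> topspace Z"
  unfolding coh_def by auto

lemma coh_cont:
  assumes "coh Z T F" "\<And>x. x \<in> topspace Z \<Longrightarrow> f x \<in> topspace Y"
    "\<And>K. K \<in> F \<Longrightarrow> continuous_map (subtopology T K) Y f"
  shows "continuous_map Z Y f"
  unfolding continuous_map_def
proof (intro conjI allI impI)
  show "f \<in> topspace Z \<rightarrow> topspace Y" using assms(2) by blast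
  fix V assume V: "openin Y V"
  show "openin Z {x \<in> topspace Z. f x \<in> V}"
  proof -
    have "openin (subtopology T K) ({x \<in> topspace Z. f x \<in> V} \<inter> K)" if K: "K \<in> F" for K
    proof -
      have "openin (subtopology T K) {x \<in> topspace (subtopology T K). f x \<in> V}"
        using openin_continuous_map_preimage[OF assms(3)[OF K] V] .
      moreover have "{x \<in> topspace (subtopology T K). f x \<in> V} = {x \<in> topspace Z. f x \<in> V} \<inter> K"
        using coh_subT[OF assms(1) K] coh_subZ[OF assms(1) K] by auto
      ultimately show ?thesis by simp
    qed
    then show ?thesis by (intro coh_openI[OF assms(1)]) auto
  qed
qed

lemma cohI:
  assumes "topspace Z = \<Union>F" "\<And>K. K \<in> F \<Longrightarrow> K \<subseteq> topspace T"
    "\<And>Ov. Ov \<subseteq> topspace Z \<Longrightarrow> (\<And>K. K \<in> F \<Longrightarrow> openin (subtopology T K) (Ov \<inter> K)) \<Longrightarrow> openin Z Ov"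
  shows "coh Z T F"
  unfolding coh_def
proof (intro conjI allI impI ballI)
  show "topspace Z = \<Union> F" by (rule assms(1))
  show "\<And>K. K \<in> F \<Longrightarrow> K \<subseteq> topspace T" by (rule assms(2))
  fix Ov assume h: "Ov \<subseteq> topspace Z \<and> (\<forall>K\<in>F. openin (subtopology T K) (Ov \<inter> K))"
  show "openin Z Ov"
  proof (rule assms(3))
    show "Ov \<subseteq> topspace Z" using h by (rule conjunct1)
    fix K assume "K \<in> F" then show "openin (subtopology T K) (Ov \<inter> K)" using h by simp
  qed
qed

lemma coh_sub:
  assumes "coh Z T F" "W \<subseteq> topspace Z" "\<And>K. K \<in> F \<Longrightarrow> openin (subtopology T K) (W \<inter> K)"
  shows "coh (subtopology Z W) T ((\<lambda>K. W \<inter> K) ` F)"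
proof (rule cohI)
  show "topspace (subtopology Z W) = \<Union> ((\<inter>) W ` F)"
    using coh_top[OF assms(1)] assms(2) by auto
  fix K assume "K \<in> (\<inter>) W ` F" then show "K \<subseteq> topspace T" using coh_subT[OF assms(1)] by auto
next
  fix Ov assume Ov1: "Ov \<subseteq> topspace (subtopology Z W)"
    and Ov2: "\<And>K. K \<in> (\<inter>) W ` F \<Longrightarrow> openin (subtopology T K) (Ov \<inter> K)"
  have OW: "Ov \<subseteq> W" using Ov1 by auto
  have "openin (subtopology T K) (Ov \<inter> K)" if K: "K \<in> F" for K
  proof -
    have "openin (subtopology T (W \<inter> K)) (Ov \<inter> (W \<inter> K))" using Ov2 K by blast
    then have "openin (subtopology (subtopology T K) (W \<inter> K)) (Ov \<inter> (W \<inter> K))"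
      by (simp add: subtopology_subtopology Int_commute)
    then have "openin (subtopology T K) (Ov \<inter> (W \<inter> K))"
      using openin_trans_full assms(3)[OF K] by blast
    moreover have "Ov \<inter> (W \<inter> K) = Ov \<inter> K" using OW by auto
    ultimately show ?thesis by simp
  qed
  then have "openin Z Ov" using Ov1 by (intro coh_openI[OF assms(1)]) auto
  then show "openin (subtopology Z W) Ov"
    using OW by (metis inf.absorb_iff2 openin_subtopology_Int2)
qed

lemma coh_prod:
  assumes "coh Z T F"
  shows "coh (prod_topology (top_of_set {0..1::real}) Z) (prod_topology euclideanreal T)
             ((\<lambda>K. {0..1} \<times> K) ` F)"
proof (rule cohI)
  have UZ: "topspace Z = \<Union>F" using coh_top[OF assms] .
  have FZ: "\<And>K. K \<in> F \<Longrightarrow> K \<subseteq> topspace Z" using coh_subZ[OF assms] .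
  have FT: "\<And>K. K \<in> F \<Longrightarrow> K \<subseteq> topspace T" using coh_subT[OF assms] .
  show "topspace (prod_topology (top_of_set {0..1::real}) Z) = \<Union> ((\<times>) {0..1} ` F)"
    using UZ by auto
  fix K assume "K \<in> (\<times>) {0..1::real} ` F" then show "K \<subseteq> topspace (prod_topology euclideanreal T)"
    using FT by auto
next
  have UZ: "topspace Z = \<Union>F" using coh_top[OF assms] .
  have FZ: "\<And>K. K \<in> F \<Longrightarrow> K \<subseteq> topspace Z" using coh_subZ[OF assms] .
  have FT: "\<And>K. K \<in> F \<Longrightarrow> K \<subseteq> topspace T" using coh_subT[OF assms] .
  fix Ov assume Ov1: "Ov \<subseteq> topspace (prod_topology (top_of_set {0..1::real}) Z)"
    and Ov2: "\<And>K. K \<in> (\<times>) {0..1} ` F \<Longrightarrow> openin (subtopology (prod_topology euclideanreal T) K) (Ov \<inter> K)"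
  have trace: "openin (prod_topology (top_of_set {0..1}) (subtopology T K)) (Ov \<inter> ({0..1} \<times> K))"
    if "K \<in> F" for K
    using Ov2[of "{0..1} \<times> K"] that by (simp add: subtopology_Times)
  show "openin (prod_topology (top_of_set {0..1}) Z) Ov"
    unfolding openin_subopen[of _ Ov]
  proof (intro ballI)
    fix p assume "p \<in> Ov"
    then obtain t0 x0 where p: "p = (t0, x0)" "(t0,x0) \<in> Ov" by (cases p) auto
    with Ov1 have t0: "t0 \<in> {0..1}" and x0: "x0 \<in> topspace Z" by auto
    then obtain K0 where K0: "K0 \<in> F" "x0 \<in> K0" using UZ by auto
    obtain U1 V1 where UV: "openin (top_of_set {0..1}) U1" "openin (subtopology T K0) V1"
      "t0 \<in> U1" "x0 \<in> V1" "U1 \<times> V1 \<subseteq> Ov \<inter> ({0..1} \<times> K0)"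
    proof -
      have "(t0,x0) \<in> Ov \<inter> ({0..1} \<times> K0)" using p(2) K0(2) t0 by auto
      then show ?thesis using trace[OF K0(1), unfolded openin_prod_topology_alt] that by meson
    qed
    obtain e where e: "e > 0" "\<And>t. t \<in> {0..1} \<Longrightarrow> dist t t0 < e \<Longrightarrow> t \<in> U1"
      using UV(1,3) unfolding openin_euclidean_subtopology_iff by (metis dist_commute)
    define J where "J = cball t0 (e/2) \<inter> {0..1::real}"
    have J: "compactin (top_of_set {0..1}) J"
      unfolding J_def by (auto simp: compactin_subtopology compact_Int_closed)
    have JU: "J \<subseteq> U1" using e unfolding J_def by (auto simp: dist_commute)
    define M where "M = {x \<in> topspace Z. J \<times> {x} \<subseteq> Ov}"
    have Mopen: "openin Z M"
    proof -
      have "M \<subseteq> topspace Z" unfolding M_def by auto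
      moreover have "openin (subtopology T K) (M \<inter> K)" if K: "K \<in> F" for K
        unfolding openin_subopen[of _ "M \<inter> K"]
      proof
        fix y assume y: "y \<in> M \<inter> K"
        have yT: "y \<in> topspace (subtopology T K)" using y FT[OF K] by auto
        have "J \<subseteq> {0..1}" unfolding J_def by auto
        then have "J \<times> {y} \<subseteq> Ov \<inter> ({0..1} \<times> K)" using y unfolding M_def by blast
        then obtain U2 V2 where UV2: "openin (top_of_set {0..1}) U2" "openin (subtopology T K) V2"
          "J \<subseteq> U2" "y \<in> V2" "U2 \<times> V2 \<subseteq> Ov \<inter> ({0..1} \<times> K)"
          using tube_lemma_left[OF trace[OF K] J yT] by blast
        have "V2 \<subseteq> M \<inter> K"
        proof
          fix z assume z: "z \<in> V2"
          then have zK: "z \<in> K" using UV2(2) openin_subset by fastforce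
          moreover have "J \<times> {z} \<subseteq> Ov" using UV2(3,5) z by auto
          ultimately show "z \<in> M \<inter> K" using FZ[OF K] unfolding M_def by auto
        qed
        then show "\<exists>T'. openin (subtopology T K) T' \<and> y \<in> T' \<and> T' \<subseteq> M \<inter> K" using UV2 by blast
      qed
      ultimately show ?thesis by (intro coh_openI[OF assms]) auto
    qed
    have x0M: "x0 \<in> M"
    proof -
      have "J \<times> {x0} \<subseteq> Ov" using JU UV(4,5) by auto
      then show ?thesis using x0 unfolding M_def by auto
    qed
    define J' where "J' = ball t0 (e/2) \<inter> {0..1::real}"
    have J'open: "openin (top_of_set {0..1}) J'"
      unfolding J'_def by (metis Int_commute open_ball openin_open_Int)
    have "J' \<subseteq> J" unfolding J'_def J_def by auto
    then have "J' \<times> M \<subseteq> Ov" unfolding M_def by blast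
    moreover have "openin (prod_topology (top_of_set {0..1}) Z) (J' \<times> M)"
      using J'open Mopen by (simp add: openin_prod_Times_iff)
    moreover have "p \<in> J' \<times> M" using p t0 x0M e unfolding J'_def by auto
    ultimately show "\<exists>T'. openin (prod_topology (top_of_set {0..1}) Z) T' \<and> p \<in> T' \<and> T' \<subseteq> Ov"
      by blast
  qed
qed

lemma cs_char:
  assumes "finite \<sigma>" "\<sigma> \<subseteq> P" "is_chain ord \<sigma>"
  shows "x \<in> closed_simplex P ord \<sigma> \<longleftrightarrow> (\<forall>c. 0 \<le> x c) \<and> (\<forall>c. x c \<noteq> 0 \<longrightarrow> c \<in> \<sigma>) \<and> sum x \<sigma> = 1"
proof
  assume x: "x \<in> closed_simplex P ord \<sigma>"
  then have s: "{v. x v \<noteq> 0} \<subseteq> \<sigma>" "sum x {v. x v \<noteq> 0} = 1" "\<forall>v. 0 \<le> x v"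
    unfolding closed_simplex_def realization_carrier_def by auto
  have "sum x {v. x v \<noteq> 0} = sum x \<sigma>"
    by (rule sum.mono_neutral_left) (use assms s in auto)
  then show "(\<forall>c. 0 \<le> x c) \<and> (\<forall>c. x c \<noteq> 0 \<longrightarrow> c \<in> \<sigma>) \<and> sum x \<sigma> = 1" using s by auto
next
  assume x: "(\<forall>c. 0 \<le> x c) \<and> (\<forall>c. x c \<noteq> 0 \<longrightarrow> c \<in> \<sigma>) \<and> sum x \<sigma> = 1"
  then have sub: "{v. x v \<noteq> 0} \<subseteq> \<sigma>" by auto
  have "sum x {v. x v \<noteq> 0} = sum x \<sigma>"
    by (rule sum.mono_neutral_left) (use assms sub in auto)
  moreover have "finite {v. x v \<noteq> 0}" using sub assms finite_subset by blast
  moreover have "is_chain ord {v. x v \<noteq> 0}" using assms(3) sub unfolding is_chain_def by blast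
  ultimately show "x \<in> closed_simplex P ord \<sigma>"
    using x sub assms unfolding closed_simplex_def realization_carrier_def by auto
qed

definition CS :: "'v set \<Rightarrow> ('v \<Rightarrow> 'v \<Rightarrow> bool) \<Rightarrow> ('v \<Rightarrow> real) set set" where
  "CS P ord = {closed_simplex P ord \<sigma> | \<sigma>. finite \<sigma> \<and> \<sigma> \<subseteq> P \<and> is_chain ord \<sigma>}"

lemma openin_realization:
  "openin (realization P ord) U \<longleftrightarrow> U \<subseteq> realization_carrier P ord \<and>
     (\<forall>\<sigma>. finite \<sigma> \<and> \<sigma> \<subseteq> P \<and> is_chain ord \<sigma> \<longrightarrow>
        openin (subtopology (powertop_real UNIV) (closed_simplex P ord \<sigma>))
               (U \<inter> closed_simplex P ord \<sigma>))"
  unfolding realization_def topology_inverse'[OF istopology_realization] by simp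

lemma coh_real: "coh (realization P ord) (powertop_real UNIV) (CS P ord)"
proof (rule cohI)
  show "topspace (realization P ord) = \<Union> (CS P ord)"
  proof
    show "topspace (realization P ord) \<subseteq> \<Union> (CS P ord)"
    proof
      fix x assume "x \<in> topspace (realization P ord)"
      then have x: "x \<in> realization_carrier P ord" by (simp add: topspace_realization)
      then have "x \<in> closed_simplex P ord {v. x v \<noteq> 0}" unfolding closed_simplex_def by auto
      moreover have "finite {v. x v \<noteq> 0} \<and> {v. x v \<noteq> 0} \<subseteq> P \<and> is_chain ord {v. x v \<noteq> 0}"
        using x unfolding realization_carrier_def by auto
      ultimately show "x \<in> \<Union> (CS P ord)" unfolding CS_def by blast
    qed
    show "\<Union> (CS P ord) \<subseteq> topspace (realization P ord)"
      unfolding CS_def closed_simplex_def topspace_realization by auto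
  qed
next
  fix K assume "K \<in> CS P ord" then show "K \<subseteq> topspace (powertop_real UNIV)" by simp
next
  fix Ov assume Ov1: "Ov \<subseteq> topspace (realization P ord)" and
    Ov2: "\<And>K. K \<in> CS P ord \<Longrightarrow> openin (subtopology (powertop_real UNIV) K) (Ov \<inter> K)"
  show "openin (realization P ord) Ov" unfolding openin_realization
  proof (intro conjI allI impI)
    show "Ov \<subseteq> realization_carrier P ord" using Ov1 by (simp add: topspace_realization)
    fix \<sigma> assume "finite \<sigma> \<and> \<sigma> \<subseteq> P \<and> is_chain ord \<sigma>"
    then have "closed_simplex P ord \<sigma> \<in> CS P ord" unfolding CS_def by blast
    then show "openin (subtopology (powertop_real UNIV) (closed_simplex P ord \<sigma>)) (Ov \<inter> closed_simplex P ord \<sigma>)"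
      by (rule Ov2)
  qed
qed

lemma incl_cs:
  assumes "finite \<tau>" "\<tau> \<subseteq> R" "is_chain ord \<tau>"
  shows "continuous_map (subtopology (powertop_real UNIV) (closed_simplex R ord \<tau>)) (realization R ord) id"
  unfolding continuous_map_def
proof (intro conjI allI impI)
  show "id \<in> topspace (subtopology (powertop_real UNIV) (closed_simplex R ord \<tau>)) \<rightarrow> topspace (realization R ord)"
    by (auto simp: topspace_realization closed_simplex_def)
  fix U assume "openin (realization R ord) U"
  then have "openin (subtopology (powertop_real UNIV) (closed_simplex R ord \<tau>)) (U \<inter> closed_simplex R ord \<tau>)"
    using assms unfolding openin_realization by blast
  moreover have "{x \<in> topspace (subtopology (powertop_real UNIV) (closed_simplex R ord \<tau>)). id x \<in> U}
     = U \<inter> closed_simplex R ord \<tau>" by auto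
  ultimately show "openin (subtopology (powertop_real UNIV) (closed_simplex R ord \<tau>))
      {x \<in> topspace (subtopology (powertop_real UNIV) (closed_simplex R ord \<tau>)). id x \<in> U}" by simp
qed

lemma coh_cont_real:
  assumes "coh Z T F"
    "\<And>K. K \<in> F \<Longrightarrow> \<exists>\<tau>. finite \<tau> \<and> \<tau> \<subseteq> R \<and> is_chain ord \<tau> \<and> f ` K \<subseteq> closed_simplex R ord \<tau>"
    "\<And>K. K \<in> F \<Longrightarrow> continuous_map (subtopology T K) (powertop_real UNIV) f"
  shows "continuous_map Z (realization R ord) f"
proof (rule coh_cont[OF assms(1)])
  fix x assume "x \<in> topspace Z"
  then obtain K where K: "K \<in> F" "x \<in> K" using coh_top[OF assms(1)] by auto
  then obtain \<tau> where "f ` K \<subseteq> closed_simplex R ord \<tau>" using assms(2)[OF K(1)] by metis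
  then show "f x \<in> topspace (realization R ord)"
    using K by (auto simp: topspace_realization closed_simplex_def)
next
  fix K assume K: "K \<in> F"
  then obtain \<tau> where t: "finite \<tau>" "\<tau> \<subseteq> R" "is_chain ord \<tau>" "f ` K \<subseteq> closed_simplex R ord \<tau>"
    using assms(2)[OF K] by metis
  have "f ` topspace (subtopology T K) \<subseteq> closed_simplex R ord \<tau>" using t(4) by auto
  then have "continuous_map (subtopology T K) (subtopology (powertop_real UNIV) (closed_simplex R ord \<tau>)) f"
    using assms(3)[OF K] by (simp add: continuous_map_in_subtopology image_subset_iff_funcset)
  from continuous_map_compose[OF this incl_cs[OF t(1-3)]]
  show "continuous_map (subtopology T K) (realization R ord) f" by simp
qed

lemma cont_coord: "continuous_map (subtopology (powertop_real UNIV) K) euclideanreal (\<lambda>x. x c)"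
  by (rule continuous_map_from_subtopology) (use continuous_map_product_projection[of c UNIV "\<lambda>_. euclideanreal"] in simp)

lemma cont_coord2: "continuous_map (subtopology (prod_topology euclideanreal (powertop_real UNIV)) K) euclideanreal (\<lambda>p. snd p c)"
proof -
  have "continuous_map (prod_topology euclideanreal (powertop_real UNIV)) euclideanreal ((\<lambda>x. x c) \<circ> snd)"
    by (intro continuous_map_compose[OF continuous_map_snd]) (use continuous_map_product_projection[of c UNIV "\<lambda>_. euclideanreal"] in simp)
  then show ?thesis by (intro continuous_map_from_subtopology) (simp add: o_def)
qed

lemma cont_fst2: "continuous_map (subtopology (prod_topology euclideanreal (powertop_real UNIV)) K) euclideanreal fst"
  by (intro continuous_map_from_subtopology continuous_map_fst)

lemma open_vset:
  assumes "open A"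
  shows "openin (realization P ord) {x \<in> realization_carrier P ord. x v \<in> A}"
  unfolding openin_realization
proof (intro conjI allI impI)
  fix \<sigma>
  have "openin (subtopology (powertop_real UNIV) (closed_simplex P ord \<sigma>))
     {x \<in> topspace (subtopology (powertop_real UNIV) (closed_simplex P ord \<sigma>)). x v \<in> A}"
    by (rule openin_continuous_map_preimage[OF cont_coord]) (simp add: assms)
  moreover have "{x \<in> topspace (subtopology (powertop_real UNIV) (closed_simplex P ord \<sigma>)). x v \<in> A}
     = {x \<in> realization_carrier P ord. x v \<in> A} \<inter> closed_simplex P ord \<sigma>"
    by (auto simp: closed_simplex_def)
  ultimately show "openin (subtopology (powertop_real UNIV) (closed_simplex P ord \<sigma>))
     ({x \<in> realization_carrier P ord. x v \<in> A} \<inter> closed_simplex P ord \<sigma>)" by simp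
qed auto

lemma coh_real_sub:
  assumes "openin (realization P ord) W"
  shows "coh (subtopology (realization P ord) W) (powertop_real UNIV) ((\<lambda>K. W \<inter> K) ` CS P ord)"
proof (rule coh_sub[OF coh_real])
  show "W \<subseteq> topspace (realization P ord)" using openin_subset[OF assms] .
  fix K assume "K \<in> CS P ord"
  then obtain \<sigma> where "K = closed_simplex P ord \<sigma>" "finite \<sigma> \<and> \<sigma> \<subseteq> P \<and> is_chain ord \<sigma>"
    unfolding CS_def by blast
  then show "openin (subtopology (powertop_real UNIV) K) (W \<inter> K)"
    using assms unfolding openin_realization by blast
qed

lemma cs_convex:
  assumes "finite \<sigma>" "\<sigma> \<subseteq> P" "is_chain ord \<sigma>"
    "x \<in> closed_simplex P ord \<sigma>" "y \<in> closed_simplex P ord \<sigma>" "0 \<le> t" "t \<le> 1"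
  shows "(\<lambda>c. (1 - t) * y c + t * x c) \<in> closed_simplex P ord \<sigma>"
proof -
  have x: "(\<forall>c. 0 \<le> x c) \<and> (\<forall>c. x c \<noteq> 0 \<longrightarrow> c \<in> \<sigma>) \<and> sum x \<sigma> = 1"
    using assms cs_char by blast
  have y: "(\<forall>c. 0 \<le> y c) \<and> (\<forall>c. y c \<noteq> 0 \<longrightarrow> c \<in> \<sigma>) \<and> sum y \<sigma> = 1"
    using assms cs_char by blast
  have "(\<Sum>c\<in>\<sigma>. (1 - t) * y c + t * x c) = (1 - t) * sum y \<sigma> + t * sum x \<sigma>"
    by (simp add: sum.distrib sum_distrib_left)
  also have "\<dots> = 1" using x y by simp
  finally have s: "(\<Sum>c\<in>\<sigma>. (1 - t) * y c + t * x c) = 1" .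
  have "\<forall>c. 0 \<le> (1 - t) * y c + t * x c" using x y assms(6,7) by (simp add: add_nonneg_nonneg)
  moreover have "\<forall>c. (1 - t) * y c + t * x c \<noteq> 0 \<longrightarrow> c \<in> \<sigma>" using x y by (metis add.right_neutral mult_zero_right)
  ultimately show ?thesis using s cs_char[OF assms(1-3)] by blast
qed

lemma line_homotopy:
  assumes W: "openin (realization P ord) W"
    and a_in: "\<And>\<sigma> x. finite \<sigma> \<Longrightarrow> \<sigma> \<subseteq> P \<Longrightarrow> is_chain ord \<sigma> \<Longrightarrow> x \<in> W \<inter> closed_simplex P ord \<sigma> \<Longrightarrow> a x \<in> closed_simplex P ord \<sigma>"
    and a_cont: "\<And>\<sigma>. finite \<sigma> \<Longrightarrow> \<sigma> \<subseteq> P \<Longrightarrow> is_chain ord \<sigma> \<Longrightarrow>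
        continuous_map (subtopology (powertop_real UNIV) (W \<inter> closed_simplex P ord \<sigma>)) (powertop_real UNIV) a"
    and stay: "\<And>x t. x \<in> W \<Longrightarrow> 0 \<le> t \<Longrightarrow> t \<le> 1 \<Longrightarrow> (\<lambda>c. (1 - t) * a x c + t * x c) \<in> W"
  shows "homotopic_with (\<lambda>_. True) (subtopology (realization P ord) W) (subtopology (realization P ord) W) a id"
  unfolding homotopic_with_def
proof (intro exI conjI allI ballI)
  define h where "h = (\<lambda>p::real \<times> _. \<lambda>c. (1 - fst p) * a (snd p) c + fst p * snd p c)"
  show "h (0, x) = a x" for x unfolding h_def by simp
  show "h (1, x) = id x" for x unfolding h_def by simp
  show "True" ..
  have coh1: "coh (prod_topology (top_of_set {0..1}) (subtopology (realization P ord) W))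
      (prod_topology euclideanreal (powertop_real UNIV)) ((\<lambda>K. {0..1} \<times> K) ` ((\<lambda>K. W \<inter> K) ` CS P ord))"
    by (rule coh_prod[OF coh_real_sub[OF W]])
  have WC: "W \<subseteq> realization_carrier P ord" using openin_subset[OF W] by (simp add: topspace_realization)
  have "continuous_map (prod_topology (top_of_set {0..1}) (subtopology (realization P ord) W)) (realization P ord) h"
  proof (rule coh_cont_real[OF coh1])
    fix K :: "(real \<times> _) set" assume "K \<in> (\<times>) {0..1} ` (\<inter>) W ` CS P ord"
    then obtain \<sigma> where K: "K = {0..1} \<times> (W \<inter> closed_simplex P ord \<sigma>)" and s: "finite \<sigma>" "\<sigma> \<subseteq> P" "is_chain ord \<sigma>"
      unfolding CS_def by blast
    show "\<exists>\<tau>. finite \<tau> \<and> \<tau> \<subseteq> P \<and> is_chain ord \<tau> \<and> h ` K \<subseteq> closed_simplex P ord \<tau>"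
    proof (intro exI conjI)
      show "h ` K \<subseteq> closed_simplex P ord \<sigma>"
      proof
        fix y assume "y \<in> h ` K"
        then obtain t x where tx: "t \<in> {0..1}" "x \<in> W \<inter> closed_simplex P ord \<sigma>" "y = h (t, x)" using K by auto
        show "y \<in> closed_simplex P ord \<sigma>"
          unfolding tx(3) h_def fst_conv snd_conv
          by (rule cs_convex[OF s]) (use tx a_in[OF s] in auto)
      qed
    qed (use s in auto)
    show "continuous_map (subtopology (prod_topology euclideanreal (powertop_real UNIV)) K) (powertop_real UNIV) h"
      unfolding continuous_map_componentwise_UNIV
    proof
      fix c
      have sndc: "continuous_map (subtopology (prod_topology euclideanreal (powertop_real UNIV)) K)
          (subtopology (powertop_real UNIV) (W \<inter> closed_simplex P ord \<sigma>)) snd"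
        unfolding K by (auto simp: continuous_map_in_subtopology intro!: continuous_map_from_subtopology continuous_map_snd)
      have "continuous_map (subtopology (prod_topology euclideanreal (powertop_real UNIV)) K) euclideanreal (\<lambda>p. a (snd p) c)"
        using continuous_map_compose[OF sndc continuous_map_compose[OF a_cont[OF s] continuous_map_product_projection[of c UNIV "\<lambda>_. euclideanreal"]]]
        by (simp add: o_def)
      then show "continuous_map (subtopology (prod_topology euclideanreal (powertop_real UNIV)) K) euclideanreal (\<lambda>p. h p c)"
        unfolding h_def by (intro continuous_intros cont_fst2 cont_coord2)
    qed
  qed
  moreover have "h ` topspace (prod_topology (top_of_set {0..1}) (subtopology (realization P ord) W)) \<subseteq> W"
    using stay unfolding h_def by (auto simp: topspace_realization)
  ultimately show "continuous_map (prod_topology (top_of_set {0..1}) (subtopology (realization P ord) W)) (subtopology (realization P ord) W) h"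
    by (simp add: continuous_map_in_subtopology image_subset_iff_funcset)
qed

lemma in_cs_supp:
  assumes "x \<in> realization_carrier P ord"
  shows "finite {c. x c \<noteq> 0}" "{c. x c \<noteq> 0} \<subseteq> P" "is_chain ord {c. x c \<noteq> 0}"
    "x \<in> closed_simplex P ord {c. x c \<noteq> 0}"
  using assms unfolding realization_carrier_def closed_simplex_def by auto

lemma carrier_mono:
  assumes "P' \<subseteq> P" shows "realization_carrier P' ord \<subseteq> realization_carrier P ord"
  using assms unfolding realization_carrier_def by auto

definition rtr :: "'v \<Rightarrow> ('v \<Rightarrow> real) \<Rightarrow> ('v \<Rightarrow> real)" where
  "rtr v x = (\<lambda>c. if c = v then 0 else x c / (1 - x v))"

lemma rtr_props:
  assumes s: "finite \<sigma>" "\<sigma> \<subseteq> P" "is_chain ord \<sigma>"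
    and x: "x \<in> closed_simplex P ord \<sigma>" "x v < 1"
  shows "rtr v x \<in> closed_simplex (P - {v}) ord (\<sigma> - {v})" "rtr v x \<in> closed_simplex P ord \<sigma>"
proof -
  have xc: "(\<forall>c. 0 \<le> x c) \<and> (\<forall>c. x c \<noteq> 0 \<longrightarrow> c \<in> \<sigma>) \<and> sum x \<sigma> = 1"
    using cs_char[OF s] x by blast
  have pos: "1 - x v > 0" using x by simp
  have nn: "\<forall>c. 0 \<le> rtr v x c" using xc pos unfolding rtr_def by auto
  have sp: "\<forall>c. rtr v x c \<noteq> 0 \<longrightarrow> c \<in> \<sigma> - {v}" using xc unfolding rtr_def by auto
  have s1: "sum x (\<sigma> - {v}) = 1 - x v"
  proof (cases "v \<in> \<sigma>")
    case True then show ?thesis using xc s(1) by (simp add: sum_diff1)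
  next
    case False then have "x v = 0" using xc by blast
    then show ?thesis using False xc by simp
  qed
  have "sum (rtr v x) (\<sigma> - {v}) = sum (\<lambda>c. x c / (1 - x v)) (\<sigma> - {v})"
    unfolding rtr_def by (rule sum.cong) auto
  also have "\<dots> = sum x (\<sigma> - {v}) / (1 - x v)" by (simp add: sum_divide_distrib)
  also have "\<dots> = 1" using s1 pos by simp
  finally have sum1: "sum (rtr v x) (\<sigma> - {v}) = 1" .
  have sum2: "sum (rtr v x) \<sigma> = 1"
  proof -
    have "sum (rtr v x) \<sigma> = sum (rtr v x) (\<sigma> - {v})"
      by (rule sum.mono_neutral_right) (use s(1) in \<open>auto simp: rtr_def\<close>)
    then show ?thesis using sum1 by simp
  qed
  have s': "finite (\<sigma> - {v})" "\<sigma> - {v} \<subseteq> P - {v}" "is_chain ord (\<sigma> - {v})"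
    using s unfolding is_chain_def by auto
  show "rtr v x \<in> closed_simplex (P - {v}) ord (\<sigma> - {v})"
    using cs_char[OF s'] nn sp sum1 by blast
  show "rtr v x \<in> closed_simplex P ord \<sigma>"
    using cs_char[OF s] nn sp sum2 by blast
qed

lemma rtr_cont:
  assumes "\<And>x. x \<in> K \<Longrightarrow> x v < 1"
  shows "continuous_map (subtopology (powertop_real UNIV) K) (powertop_real UNIV) (rtr v)"
  unfolding continuous_map_componentwise_UNIV
proof
  fix c
  show "continuous_map (subtopology (powertop_real UNIV) K) euclideanreal (\<lambda>x. rtr v x c)"
  proof (cases "c = v")
    case True then show ?thesis unfolding rtr_def by simp
  next
    case False
    have "continuous_map (subtopology (powertop_real UNIV) K) euclideanreal (\<lambda>x. x c / (1 - x v))"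
      by (intro continuous_intros cont_coord) (use assms in force)
    then show ?thesis using False unfolding rtr_def by simp
  qed
qed

lemma S_heq:
  fixes P :: "'v set" and v :: 'v and ord :: "'v \<Rightarrow> 'v \<Rightarrow> bool"
  defines "S \<equiv> {x \<in> realization_carrier P ord. x v \<in> {..<1}}"
  shows "(subtopology (realization P ord) S) homotopy_equivalent_space (realization (P - {v}) ord)"
proof -
  have Sopen: "openin (realization P ord) S" unfolding S_def by (rule open_vset) simp
  have c1: "continuous_map (subtopology (realization P ord) S) (realization (P - {v}) ord) (rtr v)"
  proof (rule coh_cont_real[OF coh_real_sub[OF Sopen]])
    fix K assume "K \<in> (\<inter>) S ` CS P ord"
    then obtain \<sigma> where K: "K = S \<inter> closed_simplex P ord \<sigma>" and s: "finite \<sigma>" "\<sigma> \<subseteq> P" "is_chain ord \<sigma>"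
      unfolding CS_def by blast
    show "\<exists>\<tau>. finite \<tau> \<and> \<tau> \<subseteq> P - {v} \<and> is_chain ord \<tau> \<and> rtr v ` K \<subseteq> closed_simplex (P - {v}) ord \<tau>"
    proof (intro exI conjI)
      show "rtr v ` K \<subseteq> closed_simplex (P - {v}) ord (\<sigma> - {v})"
        using rtr_props(1)[OF s] unfolding K S_def by auto
    qed (use s in \<open>auto simp: is_chain_def\<close>)
    show "continuous_map (subtopology (powertop_real UNIV) K) (powertop_real UNIV) (rtr v)"
      by (rule rtr_cont) (auto simp: K S_def)
  qed
  have c2: "continuous_map (realization (P - {v}) ord) (subtopology (realization P ord) S) id"
  proof -
    have "continuous_map (realization (P - {v}) ord) (realization P ord) id"
    proof (rule coh_cont_real[OF coh_real])
      fix K assume "K \<in> CS (P - {v}) ord"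
      then obtain \<sigma> where K: "K = closed_simplex (P - {v}) ord \<sigma>" and s: "finite \<sigma>" "\<sigma> \<subseteq> P - {v}" "is_chain ord \<sigma>"
        unfolding CS_def by blast
      have s': "finite \<sigma>" "\<sigma> \<subseteq> P" "is_chain ord \<sigma>" using s by auto
      show "\<exists>\<tau>. finite \<tau> \<and> \<tau> \<subseteq> P \<and> is_chain ord \<tau> \<and> id ` K \<subseteq> closed_simplex P ord \<tau>"
      proof (intro exI conjI)
        show "id ` K \<subseteq> closed_simplex P ord \<sigma>"
          using cs_char[OF s] cs_char[OF s'] unfolding K by auto
      qed (use s' in auto)
      show "continuous_map (subtopology (powertop_real UNIV) K) (powertop_real UNIV) id"
        by (simp add: continuous_map_from_subtopology)
    qed
    moreover have "topspace (realization (P - {v}) ord) \<subseteq> S"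
    proof
      fix x assume "x \<in> topspace (realization (P - {v}) ord)"
      then have x: "x \<in> realization_carrier (P - {v}) ord" by (simp add: topspace_realization)
      then have "x v = 0" unfolding realization_carrier_def by auto
      then show "x \<in> S" using carrier_mono[of "P - {v}" P ord] x unfolding S_def by auto
    qed
    ultimately show ?thesis by (simp add: continuous_map_in_subtopology image_subset_iff_funcset Pi_iff subset_iff)
  qed
  have h1: "homotopic_with (\<lambda>x. True) (subtopology (realization P ord) S) (subtopology (realization P ord) S) (id \<circ> rtr v) id"
  proof -
    have "homotopic_with (\<lambda>_. True) (subtopology (realization P ord) S) (subtopology (realization P ord) S) (rtr v) id"
    proof (rule line_homotopy[OF Sopen])
      fix \<sigma> x assume s: "finite \<sigma>" "\<sigma> \<subseteq> P" "is_chain ord \<sigma>" and x: "x \<in> S \<inter> closed_simplex P ord \<sigma>"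
      then show "rtr v x \<in> closed_simplex P ord \<sigma>" using rtr_props(2)[OF s] unfolding S_def by auto
    next
      fix \<sigma> assume s: "finite \<sigma>" "\<sigma> \<subseteq> P" "is_chain ord \<sigma>"
      show "continuous_map (subtopology (powertop_real UNIV) (S \<inter> closed_simplex P ord \<sigma>)) (powertop_real UNIV) (rtr v)"
        by (rule rtr_cont) (auto simp: S_def)
    next
      fix x and t :: real assume x: "x \<in> S" and t: "0 \<le> t" "t \<le> 1"
      have xC: "x \<in> realization_carrier P ord" and xv: "x v < 1" using x unfolding S_def by auto
      note sp = in_cs_supp[OF xC]
      have "(\<lambda>c. (1 - t) * rtr v x c + t * x c) \<in> closed_simplex P ord {c. x c \<noteq> 0}"
        by (rule cs_convex[OF sp(1-3) sp(4) rtr_props(2)[OF sp(1-3) sp(4) xv] t])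
      then have "(\<lambda>c. (1 - t) * rtr v x c + t * x c) \<in> realization_carrier P ord"
        unfolding closed_simplex_def by auto
      moreover have "(1 - t) * rtr v x v + t * x v < 1"
      proof -
        have "0 \<le> x v" using xC unfolding realization_carrier_def by auto
        then have "t * x v \<le> x v" using t by (simp add: mult_left_le_one_le)
        then show ?thesis using xv by (simp add: rtr_def)
      qed
      ultimately show "(\<lambda>c. (1 - t) * rtr v x c + t * x c) \<in> S" unfolding S_def by simp
    qed
    then show ?thesis by simp
  qed
  have h2: "homotopic_with (\<lambda>x. True) (realization (P - {v}) ord) (realization (P - {v}) ord) (rtr v \<circ> id) id"
  proof (rule homotopic_with_equal)
    show "continuous_map (realization (P - {v}) ord) (realization (P - {v}) ord) (rtr v \<circ> id)"
      by (rule continuous_map_compose[OF c2 c1])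
    fix x assume "x \<in> topspace (realization (P - {v}) ord)"
    then have "x v = 0" by (auto simp: topspace_realization realization_carrier_def)
    then show "(rtr v \<circ> id) x = id x" unfolding rtr_def by auto
  qed auto
  show ?thesis unfolding homotopy_equivalent_space_def using c1 c2 h1 h2 by blast
qed

lemma U_contractible:
  fixes P :: "'v set" and v :: 'v and ord :: "'v \<Rightarrow> 'v \<Rightarrow> bool"
  defines "U \<equiv> {x \<in> realization_carrier P ord. x v \<in> {0<..}}"
  shows "contractible_space (subtopology (realization P ord) U)"
proof -
  have Uopen: "openin (realization P ord) U" unfolding U_def by (rule open_vset) simp
  define e where "e = (\<lambda>c. if c = v then 1 else (0::real))"
  have e_in: "e \<in> closed_simplex P ord \<sigma>" if s: "finite \<sigma>" "\<sigma> \<subseteq> P" "is_chain ord \<sigma>" "v \<in> \<sigma>" for \<sigma>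
  proof -
    have "sum e \<sigma> = 1" unfolding e_def using s by (simp add: sum.delta)
    then show ?thesis using cs_char[OF s(1-3)] s unfolding e_def by auto
  qed
  have "homotopic_with (\<lambda>_. True) (subtopology (realization P ord) U) (subtopology (realization P ord) U) (\<lambda>x. e) id"
  proof (rule line_homotopy[OF Uopen])
    fix \<sigma> x assume s: "finite \<sigma>" "\<sigma> \<subseteq> P" "is_chain ord \<sigma>" and x: "x \<in> U \<inter> closed_simplex P ord \<sigma>"
    then have "v \<in> \<sigma>" using cs_char[OF s] unfolding U_def by force
    then show "e \<in> closed_simplex P ord \<sigma>" using e_in s by blast
  next
    fix \<sigma>
    show "continuous_map (subtopology (powertop_real UNIV) (U \<inter> closed_simplex P ord \<sigma>)) (powertop_real UNIV) (\<lambda>x. e)"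
      by simp
  next
    fix x and t :: real assume x: "x \<in> U" and t: "0 \<le> t" "t \<le> 1"
    have xC: "x \<in> realization_carrier P ord" and xv: "x v > 0" using x unfolding U_def by auto
    note sp = in_cs_supp[OF xC]
    have "v \<in> {c. x c \<noteq> 0}" using xv by simp
    then have "(\<lambda>c. (1 - t) * e c + t * x c) \<in> closed_simplex P ord {c. x c \<noteq> 0}"
      using cs_convex[OF sp(1-3) sp(4) e_in[OF sp(1-3)] t] by blast
    then have "(\<lambda>c. (1 - t) * e c + t * x c) \<in> realization_carrier P ord"
      unfolding closed_simplex_def by auto
    moreover have "(1 - t) * e v + t * x v > 0"
    proof (cases "t = 1")
      case True then show ?thesis using xv by simp
    next
      case False then have "1 - t > 0" using t by simp
      moreover have "t * x v \<ge> 0" using t xv by simp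
      ultimately show ?thesis unfolding e_def by simp
    qed
    ultimately show "(\<lambda>c. (1 - t) * e c + t * x c) \<in> U" unfolding U_def by simp
  qed
  then show ?thesis unfolding contractible_space_def
    by (subst homotopic_with_sym) (auto simp: id_def)
qed

locale lk = group G for G (structure) +
  fixes g assumes g: "g \<in> carrier G" and Qne: "subgroup_poset G \<noteq> {}"
begin

lemma A1: "subgroup H G \<Longrightarrow> g \<in> g <# H"
  unfolding l_coset_def using g subgroup.one_closed by fastforce

lemma A2: assumes "subgroup H G" "subgroup K G" shows "g <# H \<subseteq> g <# K \<longleftrightarrow> H \<subseteq> K"
proof
  assume h: "g <# H \<subseteq> g <# K"
  show "H \<subseteq> K"
  proof
    fix h0 assume h0: "h0 \<in> H"
    then have "g \<otimes> h0 \<in> g <# K" using h unfolding l_coset_def by blast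
    then obtain k where k: "k \<in> K" "g \<otimes> h0 = g \<otimes> k" unfolding l_coset_def by blast
    have "h0 = k" using k g h0 assms subgroup.mem_carrier l_cancel by metis
    then show "h0 \<in> K" using k by simp
  qed
qed (auto simp: l_coset_def)

lemma A2eq: assumes "subgroup H G" "subgroup K G" "g <# H = g <# K" shows "H = K"
  using A2[OF assms(1,2)] A2[OF assms(2,1)] assms(3) by blast

lemma A3: assumes "subgroup H G" shows "inv g <# (g <# H) = H"
proof -
  have "inv g <# (g <# H) = (inv g \<otimes> g) <# H"
    using lcos_m_assoc[of H "inv g" g] g subgroup.subset[OF assms] by simp
  also have "\<dots> = H" using g lcos_mult_one subgroup.subset[OF assms] by simp
  finally show ?thesis .
qed

lemma A4: assumes "subgroup H G" "g <# H = {g}" shows "H = {\<one>}"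
proof -
  have "H \<subseteq> {\<one>}"
  proof
    fix h assume h: "h \<in> H"
    then have "g \<otimes> h \<in> {g}" using assms(2) unfolding l_coset_def by blast
    then have "g \<otimes> h = g \<otimes> \<one>" using g by simp
    then show "h \<in> {\<one>}" using g h subgroup.mem_carrier[OF assms(1)] l_cancel by blast
  qed
  then show ?thesis using subgroup.one_closed[OF assms(1)] by blast
qed

lemma gone: "g <# {\<one>} = {g}"
  unfolding l_coset_def using g by simp

lemma A5: assumes "c \<in> coset_poset G" "g \<in> c"
  shows "\<exists>K. subgroup K G \<and> K \<noteq> carrier G \<and> c = g <# K"
proof -
  obtain a K where aK: "c = a <# K" "a \<in> carrier G" "subgroup K G" "K \<noteq> carrier G"
    using assms(1) unfolding coset_poset_def by blast
  then have "a <# K = g <# K" using l_repr_independence assms(2) by blast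
  then show ?thesis using aK by blast
qed

lemma A6: assumes "c \<in> coset_poset G" "c \<subseteq> {g}" shows "c = {g}"
proof -
  obtain a K where aK: "c = a <# K" "a \<in> carrier G" "subgroup K G"
    using assms(1) unfolding coset_poset_def by blast
  then have "a \<in> c" using subgroup.one_closed[OF aK(3)] unfolding l_coset_def by fastforce
  then show ?thesis using assms(2) by blast
qed

lemma A7: "H \<in> subgroup_poset G \<Longrightarrow> g <# H \<in> coset_poset G"
  unfolding subgroup_poset_def coset_poset_def using g by blast

lemma Q_sub: "H \<in> subgroup_poset G \<Longrightarrow> subgroup H G"
  unfolding subgroup_poset_def by blast

lemma A8: "{g} \<in> coset_poset G"
proof -
  obtain H where H: "H \<in> subgroup_poset G" using Qne by blast
  then have Hs: "subgroup H G" "H \<noteq> {\<one>}" unfolding subgroup_poset_def by auto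
  then obtain h where "h \<in> H" "h \<noteq> \<one>" using subgroup.one_closed by blast
  then have "{\<one>} \<noteq> carrier G" using subgroup.mem_carrier[OF Hs(1)] by blast
  then show ?thesis unfolding coset_poset_def using triv_subgroup g gone by blast
qed

lemma lk_ne_v: "H \<in> subgroup_poset G \<Longrightarrow> g <# H \<noteq> {g}"
  using A4 unfolding subgroup_poset_def by blast

lemma A9: assumes "c \<in> coset_poset G" "c \<noteq> {g}" "c \<subseteq> {g} \<or> {g} \<subseteq> c"
  shows "\<exists>K \<in> subgroup_poset G. c = g <# K"
proof -
  have "g \<in> c" using assms A6 by blast
  then obtain K where K: "subgroup K G" "K \<noteq> carrier G" "c = g <# K" using A5 assms(1) by blast
  then have "K \<noteq> {\<one>}" using gone assms(2) by blast
  then show ?thesis using K unfolding subgroup_poset_def by blast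
qed

end

context lk
begin

definition phi :: "('a set \<Rightarrow> real) \<Rightarrow> ('a set \<Rightarrow> real)" where
  "phi x = (\<lambda>H. if H \<in> subgroup_poset G then x (g <# H) / (1 - x {g}) else 0)"

definition psi :: "('a set \<Rightarrow> real) \<Rightarrow> ('a set \<Rightarrow> real)" where
  "psi y = (\<lambda>c. if c = {g} then 1/2 else if c \<in> (\<lambda>H. g <# H) ` subgroup_poset G then y (inv g <# c) / 2 else 0)"

lemma inj_lk: "inj_on (\<lambda>H. g <# H) (subgroup_poset G)"
  by (rule inj_onI) (use A2eq Q_sub in blast)

lemma psi_lk: "H \<in> subgroup_poset G \<Longrightarrow> psi y (g <# H) = y H / 2"
  unfolding psi_def using lk_ne_v A3 Q_sub by auto

lemma tau_phi:
  assumes "finite \<sigma>" "\<sigma> \<subseteq> coset_poset G" "is_chain (\<subseteq>) \<sigma>"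
  defines "\<tau> \<equiv> {H \<in> subgroup_poset G. g <# H \<in> \<sigma>}"
  shows "finite \<tau>" "\<tau> \<subseteq> subgroup_poset G" "is_chain (\<subseteq>) \<tau>"
proof -
  have "\<tau> \<subseteq> (\<lambda>c. inv g <# c) ` \<sigma>"
    unfolding \<tau>_def using A3 Q_sub by (force simp: image_iff)
  then show "finite \<tau>" using assms(1) finite_subset by blast
  show "\<tau> \<subseteq> subgroup_poset G" unfolding \<tau>_def by blast
  show "is_chain (\<subseteq>) \<tau>" unfolding is_chain_def
  proof (intro ballI)
    fix H K assume H: "H \<in> \<tau>" and K: "K \<in> \<tau>"
    then have "g <# H \<subseteq> g <# K \<or> g <# K \<subseteq> g <# H" using assms(3) unfolding is_chain_def \<tau>_def by blast
    moreover have "subgroup H G" "subgroup K G" using H K Q_sub unfolding \<tau>_def by auto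
    ultimately show "H \<subseteq> K \<or> K \<subseteq> H" using A2 by blast
  qed
qed

lemma phi_in:
  assumes s: "finite \<sigma>" "\<sigma> \<subseteq> coset_poset G" "is_chain (\<subseteq>) \<sigma>"
    and x: "x \<in> closed_simplex (coset_poset G) (\<subseteq>) \<sigma>" "0 < x {g}" "x {g} < 1"
  shows "phi x \<in> closed_simplex (subgroup_poset G) (\<subseteq>) {H \<in> subgroup_poset G. g <# H \<in> \<sigma>}"
proof -
  let ?\<tau> = "{H \<in> subgroup_poset G. g <# H \<in> \<sigma>}"
  note t = tau_phi[OF s]
  have xc: "(\<forall>c. 0 \<le> x c) \<and> (\<forall>c. x c \<noteq> 0 \<longrightarrow> c \<in> \<sigma>) \<and> sum x \<sigma> = 1"
    using cs_char[OF s] x by blast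
  have pos: "1 - x {g} > 0" using x by simp
  have vs: "{g} \<in> \<sigma>" using xc x by force
  have nn: "\<forall>H. 0 \<le> phi x H" using xc pos unfolding phi_def by auto
  have sp: "\<forall>H. phi x H \<noteq> 0 \<longrightarrow> H \<in> ?\<tau>" using xc unfolding phi_def by auto
  have s1: "sum x (\<sigma> - {{g}}) = 1 - x {g}" using xc s(1) vs by (simp add: sum_diff1)
  have s2: "sum x ((\<lambda>H. g <# H) ` ?\<tau>) = sum x (\<sigma> - {{g}})"
  proof (rule sum.mono_neutral_left)
    show "finite (\<sigma> - {{g}})" using s by simp
    show "(\<lambda>H. g <# H) ` ?\<tau> \<subseteq> \<sigma> - {{g}}" using lk_ne_v by auto
    show "\<forall>c\<in>\<sigma> - {{g}} - (\<lambda>H. g <# H) ` ?\<tau>. x c = 0"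
    proof (intro ballI)
      fix c assume c: "c \<in> \<sigma> - {{g}} - (\<lambda>H. g <# H) ` ?\<tau>"
      show "x c = 0"
      proof (rule ccontr)
        assume "x c \<noteq> 0"
        have "c \<subseteq> {g} \<or> {g} \<subseteq> c" using s(3) vs c unfolding is_chain_def by blast
        then obtain K where "K \<in> subgroup_poset G" "c = g <# K" using A9 c s(2) by blast
        then show False using c by blast
      qed
    qed
  qed
  have "sum (phi x) ?\<tau> = sum (\<lambda>H. x (g <# H) / (1 - x {g})) ?\<tau>"
    unfolding phi_def by (rule sum.cong) auto
  also have "\<dots> = sum (\<lambda>H. x (g <# H)) ?\<tau> / (1 - x {g})" by (simp add: sum_divide_distrib)
  also have "sum (\<lambda>H. x (g <# H)) ?\<tau> = sum x ((\<lambda>H. g <# H) ` ?\<tau>)"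
  proof -
    have "inj_on (\<lambda>H. g <# H) ?\<tau>" by (rule inj_on_subset[OF inj_lk]) blast
    then show ?thesis by (simp add: sum.reindex)
  qed
  finally have "sum (phi x) ?\<tau> = 1" using s1 s2 pos by simp
  then show ?thesis using cs_char[OF t] nn sp by blast
qed

lemma psi_tau:
  assumes s: "finite \<sigma>" "\<sigma> \<subseteq> subgroup_poset G" "is_chain (\<subseteq>) \<sigma>"
  shows "finite (insert {g} ((\<lambda>H. g <# H) ` \<sigma>))" "insert {g} ((\<lambda>H. g <# H) ` \<sigma>) \<subseteq> coset_poset G"
    "is_chain (\<subseteq>) (insert {g} ((\<lambda>H. g <# H) ` \<sigma>))"
proof -
  let ?\<tau> = "insert {g} ((\<lambda>H. g <# H) ` \<sigma>)"
  show t1: "finite ?\<tau>" using s by simp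
  show t2: "?\<tau> \<subseteq> coset_poset G" using A8 A7 s(2) by blast
  show t3: "is_chain (\<subseteq>) ?\<tau>"
    unfolding is_chain_def
  proof (intro ballI)
    fix a b assume a: "a \<in> ?\<tau>" and b: "b \<in> ?\<tau>"
    have v_le: "{g} \<subseteq> g <# H" if "H \<in> \<sigma>" for H using A1 Q_sub s(2) that by blast
    show "a \<subseteq> b \<or> b \<subseteq> a"
    proof (cases "a = {g} \<or> b = {g}")
      case True then show ?thesis using a b v_le by auto
    next
      case False
      then obtain H K where "H \<in> \<sigma>" "K \<in> \<sigma>" "a = g <# H" "b = g <# K" using a b by auto
      moreover have "H \<subseteq> K \<or> K \<subseteq> H" using s(3) calculation(1,2) unfolding is_chain_def by blast
      ultimately show ?thesis unfolding l_coset_def by blast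
    qed
  qed
qed

lemma psi_in:
  assumes s: "finite \<sigma>" "\<sigma> \<subseteq> subgroup_poset G" "is_chain (\<subseteq>) \<sigma>"
    and y: "y \<in> closed_simplex (subgroup_poset G) (\<subseteq>) \<sigma>"
  shows "psi y \<in> closed_simplex (coset_poset G) (\<subseteq>) (insert {g} ((\<lambda>H. g <# H) ` \<sigma>))"
proof -
  let ?\<tau> = "insert {g} ((\<lambda>H. g <# H) ` \<sigma>)"
  note t1 = psi_tau(1)[OF s] and t2 = psi_tau(2)[OF s] and t3 = psi_tau(3)[OF s]
  have yc: "(\<forall>c. 0 \<le> y c) \<and> (\<forall>c. y c \<noteq> 0 \<longrightarrow> c \<in> \<sigma>) \<and> sum y \<sigma> = 1"
    using cs_char[OF s] y by blast
  have nn: "\<forall>c. 0 \<le> psi y c" using yc unfolding psi_def by auto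
  have sp: "\<forall>c. psi y c \<noteq> 0 \<longrightarrow> c \<in> ?\<tau>"
  proof (intro allI impI)
    fix c assume c: "psi y c \<noteq> 0"
    show "c \<in> ?\<tau>"
    proof (cases "c = {g}")
      case False
      then obtain H where H: "H \<in> subgroup_poset G" "c = g <# H" "y (inv g <# c) \<noteq> 0"
        using c unfolding psi_def by (auto split: if_splits)
      then have "y H \<noteq> 0" using A3 Q_sub by simp
      then show ?thesis using yc H by auto
    qed simp
  qed
  have "sum (psi y) ?\<tau> = psi y {g} + sum (psi y) ((\<lambda>H. g <# H) ` \<sigma>)"
    using s(1) lk_ne_v s(2) by (subst sum.insert) auto
  also have "sum (psi y) ((\<lambda>H. g <# H) ` \<sigma>) = sum (\<lambda>H. psi y (g <# H)) \<sigma>"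
    by (rule sum.reindex[unfolded o_def]) (rule inj_on_subset[OF inj_lk s(2)])
  also have "\<dots> = sum (\<lambda>H. y H / 2) \<sigma>" using psi_lk s(2) by (intro sum.cong) auto
  also have "\<dots> = sum y \<sigma> / 2" by (simp add: sum_divide_distrib)
  also have "\<dots> = 1/2" using yc by simp
  finally have "sum (psi y) ?\<tau> = 1" unfolding psi_def by simp
  then show "psi y \<in> closed_simplex (coset_poset G) (\<subseteq>) ?\<tau>" using cs_char[OF t1 t2 t3] nn sp by blast
qed

lemma psi_v: "psi y {g} = 1/2" unfolding psi_def by simp

lemma psi_cont: "continuous_map (powertop_real UNIV) (powertop_real UNIV) psi"
  unfolding continuous_map_componentwise_UNIV
proof
  fix c
  have pr: "continuous_map (powertop_real UNIV) euclideanreal (\<lambda>y. y d)" for d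
    using continuous_map_product_projection[of d UNIV "\<lambda>_. euclideanreal"] by simp
  show "continuous_map (powertop_real UNIV) euclideanreal (\<lambda>y. psi y c)"
  proof (cases "c = {g}")
    case True then show ?thesis unfolding psi_def by simp
  next
    case False
    show ?thesis
    proof (cases "c \<in> (\<lambda>H. g <# H) ` subgroup_poset G")
      case True
      have "continuous_map (powertop_real UNIV) euclideanreal (\<lambda>y. y (inv g <# c) / 2)"
        by (rule continuous_map_real_divide[OF pr]) auto
      then show ?thesis using True False unfolding psi_def by simp
    next
      case F2: False
      then show ?thesis using False unfolding psi_def by simp
    qed
  qed
qed

lemma phi_cont:
  assumes "\<And>x. x \<in> K \<Longrightarrow> x {g} < 1"
  shows "continuous_map (subtopology (powertop_real UNIV) K) (powertop_real UNIV) phi"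
  unfolding continuous_map_componentwise_UNIV
proof
  fix H
  show "continuous_map (subtopology (powertop_real UNIV) K) euclideanreal (\<lambda>x. phi x H)"
  proof (cases "H \<in> subgroup_poset G")
    case False then show ?thesis unfolding phi_def by simp
  next
    case True
    have "continuous_map (subtopology (powertop_real UNIV) K) euclideanreal (\<lambda>x. x (g <# H) / (1 - x {g}))"
      by (intro continuous_intros cont_coord) (use assms in force)
    then show ?thesis using True unfolding phi_def by simp
  qed
qed

lemma phi_psi: "y \<in> realization_carrier (subgroup_poset G) (\<subseteq>) \<Longrightarrow> phi (psi y) = y"
proof (rule ext)
  fix H assume y: "y \<in> realization_carrier (subgroup_poset G) (\<subseteq>)"
  show "phi (psi y) H = y H"
  proof (cases "H \<in> subgroup_poset G")
    case True then show ?thesis unfolding phi_def by (simp add: psi_lk psi_v)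
  next
    case False
    then have "y H = 0" using y unfolding realization_carrier_def by blast
    then show ?thesis using False unfolding phi_def by simp
  qed
qed

end

context lk
begin

lemma cs_mono: "\<tau> \<subseteq> \<sigma> \<Longrightarrow> closed_simplex P R \<tau> \<subseteq> closed_simplex P R \<sigma>"
  unfolding closed_simplex_def by auto

lemma D_heq:
  defines "D \<equiv> {x \<in> realization_carrier (coset_poset G) (\<subseteq>). x {g} \<in> {0<..<1}}"
  shows "(subtopology (realization (coset_poset G) (\<subseteq>)) D) homotopy_equivalent_space
         (realization (subgroup_poset G) (\<subseteq>))"
proof -
  have Dopen: "openin (realization (coset_poset G) (\<subseteq>)) D" unfolding D_def by (rule open_vset) simp
  have a_in: "psi (phi x) \<in> closed_simplex (coset_poset G) (\<subseteq>) \<sigma>"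
    if s: "finite \<sigma>" "\<sigma> \<subseteq> coset_poset G" "is_chain (\<subseteq>) \<sigma>" and x: "x \<in> D \<inter> closed_simplex (coset_poset G) (\<subseteq>) \<sigma>" for \<sigma> x
  proof -
    let ?\<tau> = "{H \<in> subgroup_poset G. g <# H \<in> \<sigma>}"
    have x1: "x \<in> closed_simplex (coset_poset G) (\<subseteq>) \<sigma>" "0 < x {g}" "x {g} < 1" using x unfolding D_def by auto
    have ph: "phi x \<in> closed_simplex (subgroup_poset G) (\<subseteq>) ?\<tau>" by (rule phi_in[OF s x1])
    note t = tau_phi[OF s]
    have A: "psi (phi x) \<in> closed_simplex (coset_poset G) (\<subseteq>) (insert {g} ((\<lambda>H. g <# H) ` ?\<tau>))"
      by (rule psi_in[OF t ph])
    have "{g} \<in> \<sigma>" using x1 cs_char[OF s] by force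
    then have "insert {g} ((\<lambda>H. g <# H) ` ?\<tau>) \<subseteq> \<sigma>" by auto
    from cs_mono[OF this] A show ?thesis by (rule subsetD)
  qed
  have c1: "continuous_map (subtopology (realization (coset_poset G) (\<subseteq>)) D) (realization (subgroup_poset G) (\<subseteq>)) phi"
  proof (rule coh_cont_real[OF coh_real_sub[OF Dopen]])
    fix K assume "K \<in> (\<inter>) D ` CS (coset_poset G) (\<subseteq>)"
    then obtain \<sigma> where K: "K = D \<inter> closed_simplex (coset_poset G) (\<subseteq>) \<sigma>" and s: "finite \<sigma>" "\<sigma> \<subseteq> coset_poset G" "is_chain (\<subseteq>) \<sigma>"
      unfolding CS_def by blast
    show "\<exists>\<tau>. finite \<tau> \<and> \<tau> \<subseteq> subgroup_poset G \<and> is_chain (\<subseteq>) \<tau> \<and> phi ` K \<subseteq> closed_simplex (subgroup_poset G) (\<subseteq>) \<tau>"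
    proof (intro exI conjI)
      show "phi ` K \<subseteq> closed_simplex (subgroup_poset G) (\<subseteq>) {H \<in> subgroup_poset G. g <# H \<in> \<sigma>}"
        using phi_in[OF s] unfolding K D_def by auto
    qed (use tau_phi[OF s] in auto)
    show "continuous_map (subtopology (powertop_real UNIV) K) (powertop_real UNIV) phi"
      by (rule phi_cont) (auto simp: K D_def)
  qed
  have c2: "continuous_map (realization (subgroup_poset G) (\<subseteq>)) (subtopology (realization (coset_poset G) (\<subseteq>)) D) psi"
  proof -
    have "continuous_map (realization (subgroup_poset G) (\<subseteq>)) (realization (coset_poset G) (\<subseteq>)) psi"
    proof (rule coh_cont_real[OF coh_real])
      fix K assume "K \<in> CS (subgroup_poset G) (\<subseteq>)"
      then obtain \<sigma> where K: "K = closed_simplex (subgroup_poset G) (\<subseteq>) \<sigma>" and s: "finite \<sigma>" "\<sigma> \<subseteq> subgroup_poset G" "is_chain (\<subseteq>) \<sigma>"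
        unfolding CS_def by blast
      show "\<exists>\<tau>. finite \<tau> \<and> \<tau> \<subseteq> coset_poset G \<and> is_chain (\<subseteq>) \<tau> \<and> psi ` K \<subseteq> closed_simplex (coset_poset G) (\<subseteq>) \<tau>"
      proof (intro exI conjI)
        show "psi ` K \<subseteq> closed_simplex (coset_poset G) (\<subseteq>) (insert {g} ((\<lambda>H. g <# H) ` \<sigma>))"
          using psi_in[OF s] unfolding K by auto
      qed (use psi_tau[OF s] in auto)
      show "continuous_map (subtopology (powertop_real UNIV) K) (powertop_real UNIV) psi"
        by (rule continuous_map_from_subtopology[OF psi_cont])
    qed
    moreover have "psi y \<in> D" if y: "y \<in> topspace (realization (subgroup_poset G) (\<subseteq>))" for y
    proof -
      have yC: "y \<in> realization_carrier (subgroup_poset G) (\<subseteq>)" using y by (simp add: topspace_realization)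
      note sp = in_cs_supp[OF yC]
      have "psi y \<in> closed_simplex (coset_poset G) (\<subseteq>) (insert {g} ((\<lambda>H. g <# H) ` {c. y c \<noteq> 0}))"
        by (rule psi_in[OF sp])
      then have "psi y \<in> realization_carrier (coset_poset G) (\<subseteq>)" unfolding closed_simplex_def by auto
      then show ?thesis unfolding D_def by (simp add: psi_v)
    qed
    ultimately show ?thesis by (auto simp: continuous_map_in_subtopology)
  qed
  have h1: "homotopic_with (\<lambda>x. True) (subtopology (realization (coset_poset G) (\<subseteq>)) D) (subtopology (realization (coset_poset G) (\<subseteq>)) D) (psi \<circ> phi) id"
  proof (rule line_homotopy[OF Dopen])
    fix \<sigma> x assume s: "finite \<sigma>" "\<sigma> \<subseteq> coset_poset G" "is_chain (\<subseteq>) \<sigma>" and x: "x \<in> D \<inter> closed_simplex (coset_poset G) (\<subseteq>) \<sigma>"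
    then show "(psi \<circ> phi) x \<in> closed_simplex (coset_poset G) (\<subseteq>) \<sigma>" using a_in by simp
  next
    fix \<sigma>
    show "continuous_map (subtopology (powertop_real UNIV) (D \<inter> closed_simplex (coset_poset G) (\<subseteq>) \<sigma>)) (powertop_real UNIV) (psi \<circ> phi)"
      by (rule continuous_map_compose[OF phi_cont psi_cont]) (auto simp: D_def)
  next
    fix x and t :: real assume x: "x \<in> D" and t: "0 \<le> t" "t \<le> 1"
    have xC: "x \<in> realization_carrier (coset_poset G) (\<subseteq>)" and xv: "0 < x {g}" "x {g} < 1" using x unfolding D_def by auto
    note sp = in_cs_supp[OF xC]
    have "x \<in> D \<inter> closed_simplex (coset_poset G) (\<subseteq>) {c. x c \<noteq> 0}" using x sp(4) by blast
    then have "(\<lambda>c. (1 - t) * (psi \<circ> phi) x c + t * x c) \<in> closed_simplex (coset_poset G) (\<subseteq>) {c. x c \<noteq> 0}"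
      using cs_convex[OF sp(1-3) sp(4) a_in[OF sp(1-3)] t] by simp
    then have "(\<lambda>c. (1 - t) * (psi \<circ> phi) x c + t * x c) \<in> realization_carrier (coset_poset G) (\<subseteq>)"
      unfolding closed_simplex_def by auto
    moreover have "(1 - t) * (psi \<circ> phi) x {g} + t * x {g} \<in> {0<..<1}"
    proof -
      have e: "(1 - t) * (psi \<circ> phi) x {g} + t * x {g} = (1 - t) / 2 + t * x {g}" by (simp add: psi_v)
      have "0 < (1 - t) / 2 + t * x {g}"
      proof (cases "t = 1")
        case True then show ?thesis using xv by simp
      next
        case False then have "0 < (1 - t) / 2" using t by simp
        moreover have "0 \<le> t * x {g}" using t xv by simp
        ultimately show ?thesis by linarith
      qed
      moreover have "(1 - t) / 2 + t * x {g} < 1"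
      proof (cases "t = 0")
        case True then show ?thesis by simp
      next
        case False then have "t * x {g} < t" using t xv by simp
        moreover have "(1 - t) / 2 \<le> 1 - t" using t by simp
        ultimately show ?thesis by linarith
      qed
      ultimately show ?thesis unfolding e by simp
    qed
    ultimately show "(\<lambda>c. (1 - t) * (psi \<circ> phi) x c + t * x c) \<in> D" unfolding D_def by simp
  qed
  have h2: "homotopic_with (\<lambda>x. True) (realization (subgroup_poset G) (\<subseteq>)) (realization (subgroup_poset G) (\<subseteq>)) (phi \<circ> psi) id"
  proof (rule homotopic_with_equal)
    show "continuous_map (realization (subgroup_poset G) (\<subseteq>)) (realization (subgroup_poset G) (\<subseteq>)) (phi \<circ> psi)"
      by (rule continuous_map_compose[OF c2 c1])
    fix y assume "y \<in> topspace (realization (subgroup_poset G) (\<subseteq>))"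
    then show "(phi \<circ> psi) y = id y" by (simp add: topspace_realization phi_psi)
  qed auto
  show ?thesis unfolding homotopy_equivalent_space_def using c1 c2 h1 h2 by blast
qed

end

lemma epi_to_trivial:
  assumes "group A" "trivial_group B"
  shows "(\<lambda>_. \<one>\<^bsub>B\<^esub>) \<in> epi A B"
proof -
  have B: "group B" "carrier B = {\<one>\<^bsub>B\<^esub>}" using assms(2) unfolding trivial_group_def by auto
  have "(\<lambda>_. \<one>\<^bsub>B\<^esub>) \<in> hom A B"
    unfolding hom_def using B group.is_monoid[OF B(1)] by (auto simp: monoid.l_one)
  moreover have "(\<lambda>_. \<one>\<^bsub>B\<^esub>) ` carrier A = carrier B"
    using B group.is_monoid[OF assms(1)] monoid.one_closed by fastforce
  ultimately show ?thesis unfolding epi_def by blast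
qed

lemma epi_of_exact_trivial:
  assumes ex: "exact_seq ([C3, B2, A1], [d, h])" and tr: "trivial_group C3"
  shows "h \<in> epi A1 B2"
proof -
  have gh: "group_hom A1 B2 h" and dh: "d \<in> hom B2 C3" and k: "kernel B2 C3 d = h ` carrier A1"
    using ex by auto
  have "kernel B2 C3 d = carrier B2"
    using dh tr unfolding kernel_def trivial_group_def hom_def by auto
  then show ?thesis using gh k unfolding epi_def group_hom_def group_hom_axioms_def by auto
qed

theorem mainTheorem11:
  fixes G :: "('a, 'b) monoid_scheme" and g :: 'a and n :: nat
  assumes "group G"
    and "g \<in> carrier G"
    and "carrier (reduced_homology_group (int n)
            (realization (coset_poset G - {{g}}) (\<subseteq>)))
         = {\<one>\<^bsub>reduced_homology_group (int n) (realization (coset_poset G - {{g}}) (\<subseteq>))\<^esub>}"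
  shows "\<exists>f. f \<in> epi (reduced_homology_group (int n + 1) (realization (coset_poset G) (\<subseteq>)))
                     (reduced_homology_group (int n) (realization (subgroup_poset G) (\<subseteq>)))"
proof (cases "subgroup_poset G = {}")
  case True
  have "topspace (realization (subgroup_poset G) (\<subseteq>)) = {}"
    using True by (auto simp: topspace_realization realization_carrier_def)
  then have "trivial_group (reduced_homology_group (int n) (realization (subgroup_poset G) (\<subseteq>)))"
    by (rule trivial_reduced_homology_group_empty)
  then show ?thesis using epi_to_trivial group_reduced_homology_group by blast
next
  case False
  have L: "lk G g" using assms(1,2) False by (simp add: lk_def lk_axioms_def)
  define P where "P = coset_poset G"
  define XX where "XX = realization P (\<subseteq>)"
  define C where "C = realization_carrier P (\<subseteq>)"
  define S where "S = {x \<in> C. x {g} \<in> {..<1}}"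
  define U where "U = {x \<in> C. x {g} \<in> {0<..}}"
  define D where "D = {x \<in> C. x {g} \<in> {0<..<1}}"
  have topX: "topspace XX = C" unfolding XX_def C_def by (simp add: topspace_realization)
  have Sopen: "openin XX S" unfolding XX_def S_def C_def by (rule open_vset) simp
  have Uopen: "openin XX U" unfolding XX_def U_def C_def by (rule open_vset) simp
  have UC: "U \<subseteq> C" unfolding U_def by auto
  obtain H0 where H0: "H0 \<in> subgroup_poset G" using False by blast
  define y0 where "y0 = (\<lambda>H. if H = H0 then 1 else (0::real))"
  have s0: "finite {H0}" "{H0} \<subseteq> subgroup_poset G" "is_chain (\<subseteq>) {H0}"
    using H0 by (auto simp: is_chain_def)
  have "y0 \<in> closed_simplex (subgroup_poset G) (\<subseteq>) {H0}"
    using cs_char[OF s0] unfolding y0_def by auto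
  then have "lk.psi G g y0 \<in> closed_simplex P (\<subseteq>) (insert {g} ((\<lambda>H. l_coset G g H) ` {H0}))"
    unfolding P_def by (rule lk.psi_in[OF L s0])
  then have "lk.psi G g y0 \<in> C" unfolding C_def closed_simplex_def by auto
  then have pD: "lk.psi G g y0 \<in> D" unfolding D_def by (simp add: lk.psi_v[OF L])
  have triv: "trivial_group (reduced_homology_group (int n) (subtopology XX S))"
  proof -
    have "(subtopology XX S) homotopy_equivalent_space (realization (P - {{g}}) (\<subseteq>))"
      unfolding XX_def S_def C_def by (rule S_heq)
    then have "reduced_homology_group (int n) (subtopology XX S) \<cong> reduced_homology_group (int n) (realization (P - {{g}}) (\<subseteq>))"
      by (rule homotopy_equivalent_space_imp_isomorphic_reduced_homology_groups)
    moreover have "trivial_group (reduced_homology_group (int n) (realization (P - {{g}}) (\<subseteq>)))"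
      using assms(3) unfolding trivial_group_def P_def by simp
    ultimately show ?thesis using isomorphic_group_triviality group_reduced_homology_group by blast
  qed
  have "topspace XX \<inter> S \<noteq> {}" using pD topX unfolding D_def S_def by auto
  from homology_exactness_reduced_1[OF this, of "int n + 1"]
  have ex: "exact_seq ([reduced_homology_group (int n) (subtopology XX S), relative_homology_group (int n + 1) XX S,
      reduced_homology_group (int n + 1) XX], [hom_boundary (int n + 1) XX S, hom_induced (int n + 1) XX {} XX S id])"
    by simp
  have epi1: "hom_induced (int n + 1) XX {} XX S id \<in> epi (reduced_homology_group (int n + 1) XX) (relative_homology_group (int n + 1) XX S)"
    by (rule epi_of_exact_trivial[OF ex triv])
  have iso1: "relative_homology_group (int n + 1) (subtopology XX U) D \<cong> relative_homology_group (int n + 1) XX S"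
  proof -
    have cl: "closedin XX (C - U)" unfolding closedin_def topX using Uopen UC by (simp add: Diff_Diff_Int Int_absorb1)
    have sub: "XX closure_of (C - U) \<subseteq> XX interior_of S"
      using closure_of_closedin[OF cl] interior_of_openin[OF Sopen] unfolding S_def U_def by auto
    have "S \<subseteq> topspace XX" using topX unfolding S_def by auto
    from homology_excision_axiom[OF sub this, of "int n + 1"]
    have "hom_induced (int n + 1) (subtopology XX (topspace XX - (C - U))) (S - (C - U)) (subtopology XX (topspace XX)) S id
      \<in> iso (relative_homology_group (int n + 1) (subtopology XX (topspace XX - (C - U))) (S - (C - U)))
            (relative_homology_group (int n + 1) (subtopology XX (topspace XX)) S)" .
    moreover have "topspace XX - (C - U) = U" using topX UC by auto
    moreover have "S - (C - U) = D" unfolding S_def U_def D_def by auto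
    ultimately show ?thesis by (metis is_isoI subtopology_topspace)
  qed
  have iso2: "relative_homology_group (int n + 1) (subtopology XX U) D \<cong> reduced_homology_group (int n) (subtopology XX D)"
  proof -
    have ctr: "contractible_space (subtopology XX U)" unfolding XX_def U_def C_def by (rule U_contractible)
    have ne: "topspace (subtopology XX U) \<inter> D \<noteq> {}" using pD topX unfolding D_def U_def by auto
    have "U \<inter> D = D" unfolding U_def D_def by auto
    then have "subtopology (subtopology XX U) D = subtopology XX D"
      by (simp add: subtopology_subtopology)
    moreover have "hom_boundary (int n + 1) (subtopology XX U) D
      \<in> iso (relative_homology_group (int n + 1) (subtopology XX U) D) (reduced_homology_group (int n + 1 - 1) (subtopology (subtopology XX U) D))"
      by (rule iso_relative_homology_of_contractible[OF ctr ne])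
    ultimately show ?thesis by (metis is_isoI add_diff_cancel_right')
  qed
  have iso3: "reduced_homology_group (int n) (subtopology XX D) \<cong> reduced_homology_group (int n) (realization (subgroup_poset G) (\<subseteq>))"
  proof -
    have "(subtopology XX D) homotopy_equivalent_space (realization (subgroup_poset G) (\<subseteq>))"
      unfolding XX_def D_def C_def P_def by (rule lk.D_heq[OF L])
    then show ?thesis by (rule homotopy_equivalent_space_imp_isomorphic_reduced_homology_groups)
  qed
  have "relative_homology_group (int n + 1) XX S \<cong> reduced_homology_group (int n) (realization (subgroup_poset G) (\<subseteq>))"
  proof -
    have "relative_homology_group (int n + 1) XX S \<cong> relative_homology_group (int n + 1) (subtopology XX U) D"
      using iso1 by (simp add: group.iso_sym)
    also note iso2
    also note iso3
    finally show ?thesis .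
  qed
  then obtain k where k: "k \<in> iso (relative_homology_group (int n + 1) XX S) (reduced_homology_group (int n) (realization (subgroup_poset G) (\<subseteq>)))"
    unfolding is_iso_def by blast
  have "k \<circ> hom_induced (int n + 1) XX {} XX S id \<in> epi (reduced_homology_group (int n + 1) XX) (reduced_homology_group (int n) (realization (subgroup_poset G) (\<subseteq>)))"
    using epi_compose[OF epi1] k unfolding iso_iff_mon_epi by blast
  then show ?thesis unfolding XX_def P_def by blast
qed

end
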